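(* Let $\mathbb{Z}_4$ be the semiring of integers modulo $4$. Let $A=\{a_0,a_1,a_2,a_3,b_0,b_1,b_2,b_3,c_0,c_1\}$ (ten distinct elements). Let $\mathbb{X}\colon\mathrm{As}(\{x,y,z\},A)\to\mathbb{Z}_4$ map each of the eight assignments $(x,y,z)\mapsto(a_0,b_0,c_0),(a_0,b_1,c_0),(a_1,b_0,c_1),(a_1,b_1,c_1),(a_2,b_2,c_0),(a_2,b_3,c_0),(a_3,b_2,c_1),(a_3,b_3,c_1)$ to $1$, and every other assignment to $0$. Then $\mathbb{X}$ satisfies the pure independence atoms $x\perp y$ and $xy\perp z$, but does not satisfy $x\perp yz$. Consequently the mixing rule (from $x\perp y$ and $xy\perp z$ infer $x\perp yz$) is not sound for $\mathbb{Z}_4$-teams.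
   Context: For a commutative semiring $K$, a $K$-team is a function $\mathbb{X}\colon\mathrm{As}(V,A)\to K$, where $\mathrm{As}(V,A)$ is the set of assignments $V\to A$. With $V=\{x_1<\dots<x_k\}$ and $\vec a_s=(s(x_1),\dots,s(x_k))$, let $\pi_{\mathbb{X}}$ map the fact $R(\vec a_s)$ ($R$ of arity $k$) to $\mathbb{X}(s)$. For variable tuples $\vec x,\vec y$ from $V$ with index tuples $\vec j,\vec k$, the pure independence atom $\vec x\perp\vec y$ has value $[\![\phi^{(),\vec j,\vec k}_{\rm indep}]\!]_{\pi_{\mathbb{X}}}$, where $$\phi^{(),\vec j,\vec k}_{\rm indep}=\forall\vec v\vec w\big((\theta_{\vec j}(\vec v)\wedge\theta_{\vec k}(\vec w))=(\theta_{()}\wedge\theta_{\vec j,\vec k}(\vec v,\vec w))\big)$$ and $\theta_{\vec i_1,\dots,\vec i_n}(\vec u_1,\dots,\vec u_n)=\exists\vec x'(R(\vec x')\wedge\vec x'_{\vec i_1}=\vec u_1\wedge\dots\wedge\vec x'_{\vec i_n}=\vec u_n)$. Conjunction is interpreted as product, $\exists$ as sum over $A$, $\forall$ as product over $A$, equality literals as $1/0$, and a formula equality as $1$ if both sides have equal value in $K$, and $0$ otherwise. Unfolded, $\mathbb{X}$ satisfies $\vec x\perp\vec y$ (value $\neq0$) iff for all tuples $\vec a,\vec b$ over $A$: $$\Big(\sum_{s:\,s(\vec x)=\vec a}\mathbb{X}(s)\Big)\cdot\Big(\sum_{s:\,s(\vec y)=\vec b}\mathbb{X}(s)\Big)=\Big(\sum_s\mathbb{X}(s)\Big)\cdot\Big(\sum_{s:\,s(\vec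 x)=\vec a,\,s(\vec y)=\vec b}\mathbb{X}(s)\Big)$$ in $K$. Here $xy\perp z$ has $\vec x=(x,y)$, $\vec y=(z)$, and $x\perp yz$ has $\vec x=(x)$, $\vec y=(y,z)$. *)

theory Defs
  imports Main "HOL-Library.FuncSet" "HOL-Library.Numeral_Type"
begin

definition As :: "'v set \<Rightarrow> 'a set \<Rightarrow> ('v \<Rightarrow> 'a) set" where
  "As V A = PiE V (\<lambda>_. A)"

definition pure_indep ::
  "'v set \<Rightarrow> 'a set \<Rightarrow> (('v \<Rightarrow> 'a) \<Rightarrow> 'k::comm_semiring_1) \<Rightarrow> 'v list \<Rightarrow> 'v list \<Rightarrow> bool" where
  "pure_indep V A X xs ys \<longleftrightarrow>
     (\<forall>as bs. set as \<subseteq> A \<longrightarrow> length as = length xs \<longrightarrow>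
              set bs \<subseteq> A \<longrightarrow> length bs = length ys \<longrightarrow>
        (\<Sum>s\<in>As V A. if map s xs = as then X s else 0) *
        (\<Sum>s\<in>As V A. if map s ys = bs then X s else 0) =
        (\<Sum>s\<in>As V A. X s) *
        (\<Sum>s\<in>As V A. if map s xs = as \<and> map s ys = bs then X s else 0))"

datatype var = x | y | z

datatype elem = a0 | a1 | a2 | a3 | b0 | b1 | b2 | b3 | c0 | c1

definition Xteam :: "(var \<Rightarrow> elem) \<Rightarrow> 4" where
  "Xteam s = (if (s x, s y, s z) \<in>
      {(a0,b0,c0),(a0,b1,c0),(a1,b0,c1),(a1,b1,c1),
       (a2,b2,c0),(a2,b3,c0),(a3,b2,c1),(a3,b3,c1)} then 1 else 0)"

end

theory Submission
  imports Defs
begin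

definition mk :: "elem \<times> elem \<times> elem \<Rightarrow> var \<Rightarrow> elem" where
  "mk t = (\<lambda>v. case v of x \<Rightarrow> fst t | y \<Rightarrow> fst (snd t) | z \<Rightarrow> snd (snd t))"

definition SS :: "(elem \<times> elem \<times> elem) set" where
  "SS = {(a0,b0,c0),(a0,b1,c0),(a1,b0,c1),(a1,b1,c1),
       (a2,b2,c0),(a2,b3,c0),(a3,b2,c1),(a3,b3,c1)}"

lemma elem_UNIV: "(UNIV::elem set) = {a0,a1,a2,a3,b0,b1,b2,b3,c0,c1}"
  using elem.exhaust by auto

lemma fin_elem[simp]: "finite (UNIV::elem set)"
  by (simp add: elem_UNIV)

lemma fin3[simp]: "finite (UNIV::(elem\<times>elem\<times>elem) set)"
  by (simp add: finite_Prod_UNIV)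

lemma As_UNIV: "As (UNIV::var set) (UNIV::elem set) = UNIV"
  unfolding As_def by (simp add: PiE_UNIV_domain)

lemma mk_bij: "bij mk"
proof (rule bijI)
  show "inj mk"
  proof
    fix s t assume "mk s = mk t"
    then have "mk s x = mk t x" "mk s y = mk t y" "mk s z = mk t z" by auto
    then show "s = t" by (auto simp: mk_def prod_eq_iff)
  qed
  show "surj mk"
  proof (rule surjI)
    fix f :: "var \<Rightarrow> elem"
    show "mk (f x, f y, f z) = f" by (rule ext, simp add: mk_def split: var.split)
  qed
qed

lemma sum_red:
  "(\<Sum>s\<in>UNIV. if P s then Xteam s else 0) = (\<Sum>t\<in>SS. if P (mk t) then 1 else 0)"
proof -
  have "(\<Sum>s\<in>UNIV. if P s then Xteam s else 0) = (\<Sum>t\<in>UNIV. if P (mk t) then Xteam (mk t) else 0)"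
    using sum.reindex[OF bij_is_inj[OF mk_bij], of "\<lambda>s. if P s then Xteam s else 0"]
    by (simp add: bij_is_surj[OF mk_bij] o_def)
  also have "\<dots> = (\<Sum>t\<in>UNIV. if t \<in> SS then (if P (mk t) then 1 else 0) else 0)"
    by (rule sum.cong, simp, auto simp: Xteam_def mk_def SS_def)
  also have "\<dots> = (\<Sum>t\<in>SS. if P (mk t) then 1 else 0)"
    by (subst sum.inter_restrict[symmetric]) auto
  finally show ?thesis .
qed

lemma sum_red': "(\<Sum>s\<in>UNIV. Xteam s) = (\<Sum>t\<in>SS. (1::4))"
  using sum_red[of "\<lambda>_. True"] by simp

lemma total: "(\<Sum>s\<in>UNIV. Xteam s) = 0"
  unfolding sum_red' by (simp add: SS_def)

lemma cx: "(\<Sum>s\<in>UNIV. if map s [x] = [a] then Xteam s else 0) \<in> {0,2}"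
  unfolding sum_red by (cases a) (simp_all add: SS_def mk_def)

lemma cy: "(\<Sum>s\<in>UNIV. if map s [y] = [a] then Xteam s else 0) \<in> {0,2}"
  unfolding sum_red by (cases a) (simp_all add: SS_def mk_def)

lemma cz: "(\<Sum>s\<in>UNIV. if map s [z] = [a] then Xteam s else 0) = 0"
  unfolding sum_red by (cases a) (simp_all add: SS_def mk_def)

lemma len1: "length as = Suc 0 \<Longrightarrow> \<exists>a. as = [a]"
  by (cases as) auto

lemma prod02: "u \<in> {0,2} \<Longrightarrow> v \<in> {0,2} \<Longrightarrow> u * v = (0::4)"
  by auto

lemma P1: "pure_indep (UNIV :: var set) (UNIV :: elem set) Xteam [x] [y]"
  unfolding pure_indep_def As_UNIV total mult_zero_left
proof (intro allI impI)
  fix as bs :: "elem list"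
  assume "length as = length [x]" "length bs = length [y]"
  then obtain a b where ab: "as = [a]" "bs = [b]" using len1 by fastforce
  show "(\<Sum>s\<in>UNIV. if map s [x] = as then Xteam s else 0) *
        (\<Sum>s\<in>UNIV. if map s [y] = bs then Xteam s else 0) = 0"
    unfolding ab by (rule prod02[OF cx cy])
qed

lemma P2: "pure_indep (UNIV :: var set) (UNIV :: elem set) Xteam [x, y] [z]"
  unfolding pure_indep_def As_UNIV total mult_zero_left
proof (intro allI impI)
  fix as bs :: "elem list"
  assume "length bs = length [z]"
  then obtain b where ab: "bs = [b]" using len1 by fastforce
  show "(\<Sum>s\<in>UNIV. if map s [x, y] = as then Xteam s else 0) *
        (\<Sum>s\<in>UNIV. if map s [z] = bs then Xteam s else 0) = 0"
    unfolding ab cz by (rule mult_zero_right)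
qed

lemma P3: "\<not> pure_indep (UNIV :: var set) (UNIV :: elem set) Xteam [x] [y, z]"
proof
  assume A: "pure_indep (UNIV :: var set) (UNIV :: elem set) Xteam [x] [y, z]"
  have "(\<Sum>s\<in>UNIV. if map s [x] = [a0] then Xteam s else 0) *
        (\<Sum>s\<in>UNIV. if map s [y, z] = [b2, c0] then Xteam s else 0) =
        (\<Sum>s\<in>UNIV. Xteam s) * (\<Sum>s\<in>UNIV. if map s [x] = [a0] \<and> map s [y,z] = [b2,c0] then Xteam s else 0)"
    using A[unfolded pure_indep_def As_UNIV, rule_format, of "[a0]" "[b2,c0]"] by simp
  then show False unfolding total sum_red by (simp add: SS_def mk_def)
qed

theorem mainTheorem7:
  shows "pure_indep (UNIV :: var set) (UNIV :: elem set) Xteam [x] [y]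
       \<and> pure_indep (UNIV :: var set) (UNIV :: elem set) Xteam [x, y] [z]
       \<and> \<not> pure_indep (UNIV :: var set) (UNIV :: elem set) Xteam [x] [y, z]
       \<and> \<not> (\<forall>(T :: (var \<Rightarrow> elem) \<Rightarrow> 4) u v w.
               pure_indep (UNIV :: var set) (UNIV :: elem set) T [u] [v]
             \<and> pure_indep (UNIV :: var set) (UNIV :: elem set) T [u, v] [w]
             \<longrightarrow> pure_indep (UNIV :: var set) (UNIV :: elem set) T [u] [v, w])"
  using P1 P2 P3 by blast

end
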